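(* Let $N,K,d$ be positive integers, let $\bm{r}\in\mathbb{R}^d$, let $i_w\in\{1,\dots,d\}$, let $\mathcal{H}$ be a finite nonempty scenario set, and for each $k\in\{1,\dots,K\}$ and $h\in\mathcal{H}$ let $\bm{M^{k,h}}\in\mathbb{R}^{d\times d}$. Let $\mathcal{Y}=\{\bm{y}\in\{0,1\}^{K\times d}:\sum_{k=1}^K y_{k,i}=1,\ i=1,\dots,d\}$. For $\bm{y}\in\mathcal{Y}$ and $h\in\mathcal{H}$ define vectors $\bm{u^h_n}\in\mathbb{R}^d$ by $\bm{u^h_0}=\bm{r}$ and $u^h_{n,j}=\sum_{k=1}^K\sum_{i=1}^d u^h_{n-1,i}M^{k,h}_{ij}y_{k,i}$ for $n=1,\dots,N$, $j=1,\dots,d$, and set $\ell_h(\bm{y})=u^h_{N,i_w}$. Let $\alpha\in(0,1]$ and let $\mathcal{H}^1,\dots,\mathcal{H}^P$ be a partition of $\mathcal{H}$ into $P$ subsets of equal cardinality with $\alpha|\mathcal{H}^p|\in\mathbb{Z}_+$ for all $p$. Let $\hat z_{\mathcal{H}}=\max_{\bm{y}\in\mathcal{Y}}s_\alpha\big([\ell_h(\bm{y})]_{h\in\mathcal{H}}\big)$ and for each $p$ let $\bm{y^{(p)}}\in\arg\max_{\bm{y}\in\mathcal{Y}}s_\alpha\big([\ell_h(\bm{y})]_{h\in\mathcal{H}^p}\big)$. Then $$\max_{p=1,\dots,P}s_\alpha\big([\ell_h(\bm{y^{(p)}})]_{h\in\mathcal{H}}\big)\ \le\ \hat z_{\mathcal{H}}\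 \le\ \frac1P\sum_{p=1}^P s_\alpha\big([\ell_h(\bm{y^{(p)}})]_{h\in\mathcal{H}^p}\big).$$
   Context: For a finite index set $\mathcal{G}$, a vector $\bm{\upsilon}\in\mathbb{R}^{|\mathcal{G}|}$ and $\alpha\in(0,1]$ with $\alpha|\mathcal{G}|\in\mathbb{Z}_+$, $s_\alpha(\bm{\upsilon})$ denotes the average of the $\alpha|\mathcal{G}|$ smallest entries of $\bm{\upsilon}$. In the paper $\hat z_{\mathcal{H}}$ is defined as the optimal value of a mixed-integer linear program that is an exact reformulation of the maximization problem written above; $i_w$ is the index of the target ("wild type") state and $y_{k,i}=1$ means antibiotic $k$ is applied whenever the state is $i$. *)

theory Defs
  imports "HOL-Analysis.Analysis"
begin

definition s_alpha :: "'h set \<Rightarrow> real \<Rightarrow> ('h \<Rightarrow> real) \<Rightarrow> real" where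
  "s_alpha G \<alpha> v =
     (let m = nat \<lfloor>\<alpha> * real (card G)\<rfloor>;
          xs = (SOME xs. set xs = G \<and> distinct xs)
      in sum_list (take m (sort (map v xs))) / real m)"

definition policies :: "nat \<Rightarrow> nat \<Rightarrow> (nat \<Rightarrow> nat \<Rightarrow> real) set" where
  "policies K d = {y. (\<forall>k i. y k i \<in> {0,1}) \<and>
                      (\<forall>k i. (k \<notin> {1..K} \<or> i \<notin> {1..d}) \<longrightarrow> y k i = 0) \<and>
                      (\<forall>i\<in>{1..d}. (\<Sum>k=1..K. y k i) = 1)}"

text \<open>u^h_n as a vector indexed by 1..d; M k h i j is entry (i,j) of M^{k,h}.\<close>
fun uvec :: "nat \<Rightarrow> nat \<Rightarrow> (nat \<Rightarrow> real) \<Rightarrow> (nat \<Rightarrow> 'h \<Rightarrow> nat \<Rightarrow> nat \<Rightarrow> real)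
               \<Rightarrow> (nat \<Rightarrow> nat \<Rightarrow> real) \<Rightarrow> 'h \<Rightarrow> nat \<Rightarrow> nat \<Rightarrow> real" where
  "uvec K d r M y h 0 j = r j"
| "uvec K d r M y h (Suc n) j =
     (\<Sum>k=1..K. \<Sum>i=1..d. uvec K d r M y h n i * M k h i j * y k i)"

definition ell :: "nat \<Rightarrow> nat \<Rightarrow> nat \<Rightarrow> (nat \<Rightarrow> real) \<Rightarrow> nat
                    \<Rightarrow> (nat \<Rightarrow> 'h \<Rightarrow> nat \<Rightarrow> nat \<Rightarrow> real) \<Rightarrow> (nat \<Rightarrow> nat \<Rightarrow> real) \<Rightarrow> 'h \<Rightarrow> real" where
  "ell N K d r iw M y h = uvec K d r M y h N iw"

end

theory Submission imports Defs "HOL-Library.Multiset" begin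

lemma sorted_take_le:
  fixes ys :: "real list"
  shows "sorted ys \<Longrightarrow> A \<subseteq># mset ys \<Longrightarrow> size A = m \<Longrightarrow> sum_list (take m ys) \<le> sum_mset A"
proof (induction ys arbitrary: m A)
  case Nil
  then show ?case by simp
next
  case (Cons y ys)
  show ?case
  proof (cases m)
    case 0 then show ?thesis using Cons by simp
  next
    case (Suc m')
    show ?thesis
    proof (cases "y \<in># A")
      case True
      define A' where "A' = A - {#y#}"
      have A: "A = add_mset y A'" using True A'_def by simp
      have "A' \<subseteq># mset ys" using Cons.prems(2) A by simp
      moreover have "size A' = m'" using Cons.prems(3) A Suc by simp
      ultimately have "sum_list (take m' ys) \<le> sum_mset A'" using Cons by simp
      then show ?thesis using A Suc by simp
    next
      case False
      have sub: "A \<subseteq># mset ys" using Cons.prems(2) False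
        by (metis Diff_eq_empty_iff_mset minus_add_mset_if_not_in_lhs mset.simps(2))
      from Cons.prems(3) Suc obtain a where a: "a \<in># A"
        by (metis multiset_nonemptyE nat.distinct(1) size_empty)
      define A' where "A' = A - {#a#}"
      have A: "A = add_mset a A'" using a A'_def by simp
      have "A' \<subseteq># mset ys" using sub A using A'_def by (metis diff_subset_eq_self subset_mset.order_trans)
      moreover have "size A' = m'" using Cons.prems(3) A Suc by simp
      ultimately have "sum_list (take m' ys) \<le> sum_mset A'" using Cons by simp
      moreover have "y \<le> a" using Cons.prems(1) sub a by (auto dest: mset_subset_eqD)
      ultimately show ?thesis using A Suc by simp
    qed
  qed
qed

lemma s_alpha_char:
  assumes "finite G" "m = nat \<lfloor>\<alpha> * real (card G)\<rfloor>" "m \<le> card G"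
  obtains L where "s_alpha G \<alpha> v = L / real m" "\<exists>S\<subseteq>G. card S = m \<and> L = sum v S"
    "\<forall>S\<subseteq>G. card S = m \<longrightarrow> L \<le> sum v S"
proof -
  define xs where "xs = (SOME xs. set xs = G \<and> distinct xs)"
  have xs: "set xs = G \<and> distinct xs"
    unfolding xs_def by (rule someI_ex) (use finite_distinct_list[OF assms(1)] in blast)
  define L where "L = sum_list (take m (sort (map v xs)))"
  have 1: "s_alpha G \<alpha> v = L / real m"
    unfolding s_alpha_def L_def xs_def assms(2) Let_def by simp
  define zs where "zs = sort_key v xs"
  have "mset (map v zs) = mset (map v xs)"
    unfolding zs_def by (metis mset_map mset_sort)
  then have srt: "sort (map v xs) = map v zs"
    by (intro properties_for_sort) (auto simp: zs_def)
  have lenxs: "length xs = card G" using xs distinct_card by fastforce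
  have 2: "\<exists>S\<subseteq>G. card S = m \<and> L = sum v S"
  proof (intro exI conjI)
    show "set (take m zs) \<subseteq> G" by (rule order_trans[OF set_take_subset]) (simp add: zs_def xs)
    have dz: "distinct (take m zs)" using xs unfolding zs_def by simp
    have "length zs = card G" using lenxs unfolding zs_def by simp
    then show "card (set (take m zs)) = m" using dz assms(3) by (simp add: distinct_card)
    show "L = sum v (set (take m zs))"
      unfolding L_def srt using dz by (simp add: take_map sum_list_distinct_conv_sum_set)
  qed
  have 3: "\<forall>S\<subseteq>G. card S = m \<longrightarrow> L \<le> sum v S"
  proof (intro allI impI)
    fix S assume S: "S \<subseteq> G" "card S = m"
    have "image_mset v (mset_set S) \<subseteq># image_mset v (mset_set G)"
      by (intro image_mset_subseteq_mono subset_imp_msubset_mset_set assms(1) S(1))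
    also have "image_mset v (mset_set G) = mset (sort (map v xs))"
      using xs mset_set_set by fastforce
    finally have sub: "image_mset v (mset_set S) \<subseteq># mset (sort (map v xs))" .
    have "L \<le> sum_mset (image_mset v (mset_set S))"
      unfolding L_def by (rule sorted_take_le[OF _ sub]) (use S in simp_all)
    then show "L \<le> sum v S" by (simp add: sum_unfold_sum_mset)
  qed
  show ?thesis using that 1 2 3 by blast
qed


lemma policies_finite: "finite (policies K d)"
proof -
  define A where "A = {1..K} \<times> {1..d}"
  have "policies K d \<subseteq> (\<lambda>f k i. if (k,i)\<in>A then f (k,i) else 0) ` (PiE A (\<lambda>_. {0,1::real}))"
  proof
    fix y assume y: "y \<in> policies K d"
    let ?f = "restrict (\<lambda>(k,i). y k i) A"
    have "?f \<in> PiE A (\<lambda>_. {0,1::real})" using y unfolding policies_def by auto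
    moreover have "y = (\<lambda>k i. if (k,i)\<in>A then ?f (k,i) else 0)"
      using y unfolding policies_def A_def by (auto intro!: ext)
    ultimately show "y \<in> (\<lambda>f k i. if (k,i)\<in>A then f (k,i) else 0) ` (PiE A (\<lambda>_. {0,1::real}))"
      by blast
  qed
  moreover have "finite (PiE A (\<lambda>_. {0,1::real}))" unfolding A_def by (intro finite_PiE) auto
  ultimately show ?thesis using finite_subset by blast
qed

lemma s_split:
  fixes H :: "'h set" and Hp :: "nat \<Rightarrow> 'h set" and v :: "'h \<Rightarrow> real"
  assumes "finite H" "0 < \<alpha>" "\<alpha> \<le> 1" "P > 0"
    and "\<forall>p\<in>{1..P}. Hp p \<subseteq> H"
    and "(\<Union>p\<in>{1..P}. Hp p) = H"
    and "\<forall>p\<in>{1..P}. \<forall>q\<in>{1..P}. p \<noteq> q \<longrightarrow> Hp p \<inter> Hp q = {}"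
    and "\<forall>p\<in>{1..P}. \<forall>q\<in>{1..P}. card (Hp p) = card (Hp q)"
    and "\<forall>p\<in>{1..P}. \<alpha> * real (card (Hp p)) \<in> \<nat> \<and> \<alpha> * real (card (Hp p)) > 0"
  shows "s_alpha H \<alpha> v \<le> (\<Sum>p=1..P. s_alpha (Hp p) \<alpha> v) / real P"
proof -
  define c where "c = card (Hp 1)"
  have P1: "1 \<in> {1..P}" using assms(4) by simp
  have cp: "card (Hp p) = c" if "p \<in> {1..P}" for p using assms(8) P1 that c_def by metis
  obtain mc :: nat where mc: "\<alpha> * real c = real mc"
    using assms(9) P1 c_def by (metis Nats_cases)
  have mcpos: "mc > 0" using assms(9) P1 c_def mc by (metis of_nat_0_less_iff)
  have mcc: "mc \<le> c"
  proof -
    have "\<alpha> * real c \<le> real c" using assms(2,3) by (simp add: mult_left_le_one_le)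
    then show ?thesis using mc by simp
  qed
  have finp: "finite (Hp p)" if "p \<in> {1..P}" for p using assms(1,5) that finite_subset by blast
  have cardH: "card H = P * c"
  proof -
    have "card H = (\<Sum>p\<in>{1..P}. card (Hp p))"
      unfolding assms(6)[symmetric] by (rule card_UN_disjoint) (use finp assms(7) in auto)
    also have "\<dots> = P * c" using cp by simp
    finally show ?thesis .
  qed
  have "\<forall>p\<in>{1..P}. \<exists>S. S \<subseteq> Hp p \<and> card S = mc \<and> s_alpha (Hp p) \<alpha> v = sum v S / real mc"
  proof
    fix p assume p: "p \<in> {1..P}"
    have m: "mc = nat \<lfloor>\<alpha> * real (card (Hp p))\<rfloor>" using cp[OF p] mc by simp
    obtain L where "s_alpha (Hp p) \<alpha> v = L / real mc" "\<exists>S\<subseteq>Hp p. card S = mc \<and> L = sum v S"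
      using s_alpha_char[OF finp[OF p] m] mcc cp[OF p] by metis
    then show "\<exists>S. S \<subseteq> Hp p \<and> card S = mc \<and> s_alpha (Hp p) \<alpha> v = sum v S / real mc" by auto
  qed
  then obtain S where S: "\<And>p. p\<in>{1..P} \<Longrightarrow> S p \<subseteq> Hp p \<and> card (S p) = mc \<and> s_alpha (Hp p) \<alpha> v = sum v (S p) / real mc"
    by metis
  have mH: "P * mc = nat \<lfloor>\<alpha> * real (card H)\<rfloor>"
  proof -
    have "\<alpha> * real (card H) = real (P * mc)" using cardH mc by (simp add: algebra_simps)
    then show ?thesis by (metis floor_of_nat nat_int)
  qed
  obtain LH where LH: "s_alpha H \<alpha> v = LH / real (P * mc)"
    "\<forall>T\<subseteq>H. card T = P * mc \<longrightarrow> LH \<le> sum v T"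
    using s_alpha_char[OF assms(1) mH] mcc cardH by (metis mult_le_mono2)
  define T where "T = (\<Union>p\<in>{1..P}. S p)"
  have finS: "finite (S p)" if "p \<in> {1..P}" for p using S[OF that] finp[OF that] finite_subset by blast
  have disjS: "\<forall>p\<in>{1..P}. \<forall>q\<in>{1..P}. p \<noteq> q \<longrightarrow> S p \<inter> S q = {}"
    using assms(7) S by blast
  have TH: "T \<subseteq> H" unfolding T_def using S assms(5) by blast
  have "card T = (\<Sum>p\<in>{1..P}. card (S p))"
    unfolding T_def by (rule card_UN_disjoint) (use finS disjS in auto)
  also have "\<dots> = P * mc" using S by simp
  finally have cardT: "card T = P * mc" .
  have sumT: "sum v T = (\<Sum>p\<in>{1..P}. sum v (S p))"
    unfolding T_def by (rule sum.UNION_disjoint) (use finS disjS in auto)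
  have "s_alpha H \<alpha> v \<le> sum v T / real (P * mc)"
    using LH TH cardT by (simp add: divide_right_mono)
  also have "\<dots> = (\<Sum>p\<in>{1..P}. sum v (S p) / real mc) / real P"
    unfolding sumT by (simp add: sum_divide_distrib[symmetric] field_simps)
  also have "\<dots> = (\<Sum>p=1..P. s_alpha (Hp p) \<alpha> v) / real P"
    using S by (intro arg_cong[where f="\<lambda>x. x / real P"] sum.cong) auto
  finally show ?thesis .
qed

theorem proposition4:
  fixes N K d P :: nat and r :: "nat \<Rightarrow> real" and iw :: nat
    and H :: "'h set" and M :: "nat \<Rightarrow> 'h \<Rightarrow> nat \<Rightarrow> nat \<Rightarrow> real"
    and \<alpha> :: real and Hp :: "nat \<Rightarrow> 'h set"
    and yp :: "nat \<Rightarrow> nat \<Rightarrow> nat \<Rightarrow> real"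
  assumes "N > 0" "K > 0" "d > 0"
    and "iw \<in> {1..d}"
    and "finite H" "H \<noteq> {}"
    and "0 < \<alpha>" "\<alpha> \<le> 1"
    and "P > 0"
    and "\<forall>p\<in>{1..P}. Hp p \<subseteq> H"
    and "(\<Union>p\<in>{1..P}. Hp p) = H"
    and "\<forall>p\<in>{1..P}. \<forall>q\<in>{1..P}. p \<noteq> q \<longrightarrow> Hp p \<inter> Hp q = {}"
    and "\<forall>p\<in>{1..P}. \<forall>q\<in>{1..P}. card (Hp p) = card (Hp q)"
    and "\<forall>p\<in>{1..P}. \<alpha> * real (card (Hp p)) \<in> \<nat> \<and> \<alpha> * real (card (Hp p)) > 0"
    and "\<forall>p\<in>{1..P}. yp p \<in> policies K d \<and>
           (\<forall>y\<in>policies K d. s_alpha (Hp p) \<alpha> (ell N K d r iw M y)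
                               \<le> s_alpha (Hp p) \<alpha> (ell N K d r iw M (yp p)))"
  shows "(MAX p\<in>{1..P}. s_alpha H \<alpha> (ell N K d r iw M (yp p)))
           \<le> (MAX y\<in>policies K d. s_alpha H \<alpha> (ell N K d r iw M y))
       \<and> (MAX y\<in>policies K d. s_alpha H \<alpha> (ell N K d r iw M y))
           \<le> (\<Sum>p=1..P. s_alpha (Hp p) \<alpha> (ell N K d r iw M (yp p))) / real P"
proof -
  let ?f = "\<lambda>y. s_alpha H \<alpha> (ell N K d r iw M y)"
  have fin: "finite (policies K d)" by (rule policies_finite)
  have P1: "1 \<in> {1..P}" using assms(9) by simp
  have ne: "policies K d \<noteq> {}" using assms(15) P1 by blast
  have A: "(MAX p\<in>{1..P}. ?f (yp p)) \<le> (MAX y\<in>policies K d. ?f y)"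
  proof (subst Max_le_iff)
    show "finite ((\<lambda>p. ?f (yp p)) ` {1..P})" by simp
    show "(\<lambda>p. ?f (yp p)) ` {1..P} \<noteq> {}" using P1 by blast
    show "\<forall>a\<in>(\<lambda>p. ?f (yp p)) ` {1..P}. a \<le> (MAX y\<in>policies K d. ?f y)"
      using assms(15) fin by (auto intro!: Max_ge)
  qed
  have B: "(MAX y\<in>policies K d. ?f y)
      \<le> (\<Sum>p=1..P. s_alpha (Hp p) \<alpha> (ell N K d r iw M (yp p))) / real P"
  proof (subst Max_le_iff)
    show "finite (?f ` policies K d)" using fin by simp
    show "?f ` policies K d \<noteq> {}" using ne by blast
    show "\<forall>a\<in>?f ` policies K d. a \<le> (\<Sum>p=1..P. s_alpha (Hp p) \<alpha> (ell N K d r iw M (yp p))) / real P"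
    proof
      fix a assume "a \<in> ?f ` policies K d"
      then obtain y where y: "y \<in> policies K d" "a = ?f y" by blast
      have "a \<le> (\<Sum>p=1..P. s_alpha (Hp p) \<alpha> (ell N K d r iw M y)) / real P"
        unfolding y(2) by (rule s_split[OF assms(5,7,8,9,10,11,12,13,14)])
      also have "\<dots> \<le> (\<Sum>p=1..P. s_alpha (Hp p) \<alpha> (ell N K d r iw M (yp p))) / real P"
        using assms(9,15) y(1) by (intro divide_right_mono sum_mono) auto
      finally show "a \<le> (\<Sum>p=1..P. s_alpha (Hp p) \<alpha> (ell N K d r iw M (yp p))) / real P" .
    qed
  qed
  show ?thesis using A B by blast
qed

end
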